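(* Let $\beta>1$ be fixed. Then the sequence $(\delta(k,\beta))_{k\in\mathbb{N}}$ is strictly increasing and \[ \delta(k,\beta)=(\beta-1)-\frac{\beta}{2(\beta+1)}\frac{1}{k^2}+O\!\left(\frac1{k^3}\right),\qquad k\to+\infty. \]
   Context: $\mathbb{N}=\{0,1,2,\dots\}$. For $t\ge 0$ let $q(t)=\lfloor t+1\rfloor/2$ if $\lfloor t\rfloor$ is odd and $q(t)=t-\lfloor t\rfloor/2$ if $\lfloor t\rfloor$ is even, and $p(t)=t+1-q(t)$. For $\beta\ge1$ let $\hat\sigma(t,\beta)\in(0,1)$ be the unique solution $\sigma$ of $\frac{p(t)\sigma}{\sqrt{1-\sigma^2}}+\frac{q(t)\sigma}{\sqrt{\beta^2-\sigma^2}}=1$, and $l(t,\beta)=\frac{p(t)}{\sqrt{1-\hat\sigma^2}}+\frac{\beta^2q(t)}{\sqrt{\beta^2-\hat\sigma^2}}-t-\sqrt2$. For $k\in\mathbb{N}$, $\delta(k,\beta)=l(2k+2,\beta)-l(2k,\beta)$. *)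

theory Defs
  imports "HOL-Analysis.Analysis" "HOL-Library.Landau_Symbols"
begin

definition qf :: "real \<Rightarrow> real" where
  "qf t = (if odd \<lfloor>t\<rfloor> then real_of_int \<lfloor>t + 1\<rfloor> / 2
           else t - real_of_int \<lfloor>t\<rfloor> / 2)"

definition pf :: "real \<Rightarrow> real" where
  "pf t = t + 1 - qf t"

definition sigma_hat :: "real \<Rightarrow> real \<Rightarrow> real" where
  "sigma_hat t \<beta> = (THE \<sigma>. 0 < \<sigma> \<and> \<sigma> < 1 \<and>
      pf t * \<sigma> / sqrt (1 - \<sigma>\<^sup>2) + qf t * \<sigma> / sqrt (\<beta>\<^sup>2 - \<sigma>\<^sup>2) = 1)"

definition lf :: "real \<Rightarrow> real \<Rightarrow> real" where
  "lf t \<beta> = pf t / sqrt (1 - (sigma_hat t \<beta>)\<^sup>2)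
             + \<beta>\<^sup>2 * qf t / sqrt (\<beta>\<^sup>2 - (sigma_hat t \<beta>)\<^sup>2) - t - sqrt 2"

definition delta :: "nat \<Rightarrow> real \<Rightarrow> real" where
  "delta k \<beta> = lf (2 * real k + 2) \<beta> - lf (2 * real k) \<beta>"

end

theory Submission imports Defs begin

lemma qf_even: "qf (2 * real k) = real k" "pf (2 * real k) = real k + 1"
proof -
  have e: "2 * real k = real_of_int (2 * int k)" by simp
  have "qf (2 * real k) = real k" unfolding qf_def e floor_of_int by simp
  thus "qf (2 * real k) = real k" "pf (2 * real k) = real k + 1" by (auto simp: pf_def)
qed

lemma qf_even2: "qf (2 * real k + 2) = real k + 1" "pf (2 * real k + 2) = real k + 2"
  using qf_even[of "Suc k"] by (simp_all add: algebra_simps)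

definition H :: "real \<Rightarrow> real \<Rightarrow> real \<Rightarrow> real \<Rightarrow> real" where
  "H \<beta> p q s = p * sqrt (1 - s\<^sup>2) + q * sqrt (\<beta>\<^sup>2 - s\<^sup>2) + s"

definition G :: "real \<Rightarrow> real \<Rightarrow> real \<Rightarrow> real \<Rightarrow> real" where
  "G \<beta> p q s = p * s / sqrt (1 - s\<^sup>2) + q * s / sqrt (\<beta>\<^sup>2 - s\<^sup>2)"

lemma key_ident:
  fixes c c' \<sigma> s :: real
  assumes "c\<^sup>2 = 1 - \<sigma>\<^sup>2" "c'\<^sup>2 = 1 - s\<^sup>2"
  shows "1 - c * c' - \<sigma> * s = ((s - \<sigma>)\<^sup>2 + (c - c')\<^sup>2) / 2"
  using assms by (simp add: power2_eq_square algebra_simps)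

lemma key_identb:
  fixes c c' \<sigma> s :: real
  assumes "c\<^sup>2 = b - \<sigma>\<^sup>2" "c'\<^sup>2 = b - s\<^sup>2"
  shows "b - c * c' - \<sigma> * s = ((s - \<sigma>)\<^sup>2 + (c - c')\<^sup>2) / 2"
  using assms by (simp add: power2_eq_square algebra_simps)

lemma key:
  assumes b: "\<beta> > 1" and p: "p \<ge> 0" and q: "q \<ge> 0" and \<sigma>: "0 \<le> \<sigma>" "\<sigma> < 1"
    and eq: "G \<beta> p q \<sigma> = 1" and s: "0 \<le> s" "s \<le> 1"
  shows "H \<beta> p q s \<le> H \<beta> p q \<sigma>" and "p > 0 \<Longrightarrow> s \<noteq> \<sigma> \<Longrightarrow> H \<beta> p q s < H \<beta> p q \<sigma>"
proof -
  define c where "c = sqrt (1 - \<sigma>\<^sup>2)"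
  define c' where "c' = sqrt (1 - s\<^sup>2)"
  define d where "d = sqrt (\<beta>\<^sup>2 - \<sigma>\<^sup>2)"
  define d' where "d' = sqrt (\<beta>\<^sup>2 - s\<^sup>2)"
  have s2: "s\<^sup>2 \<le> 1" using s by (simp add: power_le_one)
  have \<sigma>2: "\<sigma>\<^sup>2 < 1" using \<sigma> by (simp add: power_less_one_iff)
  have b2: "1 < \<beta>\<^sup>2" using b by (simp add: one_less_power)
  have cpos: "c > 0" unfolding c_def using \<sigma>2 by simp
  have dpos: "d > 0" unfolding d_def using \<sigma>2 b2 by simp
  have c2: "c\<^sup>2 = 1 - \<sigma>\<^sup>2" unfolding c_def using \<sigma>2 by simp
  have c'2: "c'\<^sup>2 = 1 - s\<^sup>2" unfolding c'_def using s2 by simp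
  have d2: "d\<^sup>2 = \<beta>\<^sup>2 - \<sigma>\<^sup>2" unfolding d_def using \<sigma>2 b2 by simp
  have d'2: "d'\<^sup>2 = \<beta>\<^sup>2 - s\<^sup>2" unfolding d'_def using s2 b2 by simp
  have eq': "p * \<sigma> / c + q * \<sigma> / d = 1" using eq unfolding G_def c_def d_def .
  have "H \<beta> p q \<sigma> - H \<beta> p q s = p * (c - c') + q * (d - d') + (\<sigma> - s) * 1"
    unfolding H_def c_def c'_def d_def d'_def by (simp add: algebra_simps)
  also have "\<dots> = p * (c - c') + q * (d - d') + (\<sigma> - s) * (p * \<sigma> / c + q * \<sigma> / d)"
    using eq' by simp
  also have "\<dots> = p * ((c\<^sup>2 + \<sigma>\<^sup>2) - c * c' - \<sigma> * s) / c + q * ((d\<^sup>2 + \<sigma>\<^sup>2) - d * d' - \<sigma> * s) / d"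
    using cpos dpos by (simp add: field_simps power2_eq_square)
  also have "\<dots> = p * (((s - \<sigma>)\<^sup>2 + (c - c')\<^sup>2) / 2) / c + q * (((s - \<sigma>)\<^sup>2 + (d - d')\<^sup>2) / 2) / d"
  proof -
    have e1: "(c\<^sup>2 + \<sigma>\<^sup>2) - c * c' - \<sigma> * s = ((s - \<sigma>)\<^sup>2 + (c - c')\<^sup>2) / 2"
      using key_ident[OF c2 c'2] c2 by simp
    have e2: "(d\<^sup>2 + \<sigma>\<^sup>2) - d * d' - \<sigma> * s = ((s - \<sigma>)\<^sup>2 + (d - d')\<^sup>2) / 2"
      using key_identb[OF d2 d'2] d2 by simp
    show ?thesis by (simp only: e1 e2)
  qed
  finally have D: "H \<beta> p q \<sigma> - H \<beta> p q s = p * (((s - \<sigma>)\<^sup>2 + (c - c')\<^sup>2) / 2) / c + q * (((s - \<sigma>)\<^sup>2 + (d - d')\<^sup>2) / 2) / d" .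
  have t2: "q * (((s - \<sigma>)\<^sup>2 + (d - d')\<^sup>2) / 2) / d \<ge> 0" using q dpos by simp
  have t1: "p * (((s - \<sigma>)\<^sup>2 + (c - c')\<^sup>2) / 2) / c \<ge> 0" using p cpos by simp
  show "H \<beta> p q s \<le> H \<beta> p q \<sigma>" using D t1 t2 by linarith
  assume pp: "p > 0" and ne: "s \<noteq> \<sigma>"
  have "(s - \<sigma>)\<^sup>2 > 0" using ne by simp
  hence "p * (((s - \<sigma>)\<^sup>2 + (c - c')\<^sup>2) / 2) / c > 0" using pp cpos
    by (simp add: add_pos_nonneg)
  thus "H \<beta> p q s < H \<beta> p q \<sigma>" using D t2 by linarith
qed


lemma G_exists:
  assumes b: "\<beta> > 1" and p: "p \<ge> 1" and q: "q \<ge> 0"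
  shows "\<exists>\<sigma>. 0 < \<sigma> \<and> \<sigma> < 1 \<and> G \<beta> p q \<sigma> = 1"
proof -
  have b2: "1 < \<beta>\<^sup>2" using b by (simp add: one_less_power)
  have cont: "continuous_on {0..4/5} (G \<beta> p q)"
  proof -
    have "\<forall>x\<in>{0..4/5::real}. sqrt (1 - x\<^sup>2) \<noteq> 0 \<and> sqrt (\<beta>\<^sup>2 - x\<^sup>2) \<noteq> 0"
    proof
      fix x :: real assume "x \<in> {0..4/5}"
      hence "x\<^sup>2 < 1" by (simp add: power_less_one_iff)
      thus "sqrt (1 - x\<^sup>2) \<noteq> 0 \<and> sqrt (\<beta>\<^sup>2 - x\<^sup>2) \<noteq> 0" using b2 by simp
    qed
    thus ?thesis unfolding G_def by (intro continuous_intros) auto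
  qed
  have g0: "G \<beta> p q 0 \<le> 1" by (simp add: G_def)
  have sq: "sqrt (1 - (4/5::real)\<^sup>2) = 3/5"
  proof -
    have "1 - (4/5::real)\<^sup>2 = (3/5)\<^sup>2" by (simp add: power2_eq_square)
    thus ?thesis by simp
  qed
  have "(4/5::real)\<^sup>2 < \<beta>\<^sup>2" using b2 by (simp add: power2_eq_square)
  hence t2: "q * (4/5) / sqrt (\<beta>\<^sup>2 - (4/5)\<^sup>2) \<ge> 0" using q by simp
  have t1: "p * (4/5) / sqrt (1 - (4/5::real)\<^sup>2) \<ge> 1" using p by (simp add: sq)
  have g1: "1 \<le> G \<beta> p q (4/5)" unfolding G_def using t1 t2 by linarith
  obtain x where x: "0 \<le> x" "x \<le> 4/5" "G \<beta> p q x = 1"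
    using IVT'[of "G \<beta> p q" 0 1 "4/5", OF g0 g1 _ cont] by auto
  have "x \<noteq> 0" using x(3) by (auto simp: G_def)
  thus ?thesis using x by (intro exI[of _ x]) auto
qed

lemma G_unique:
  assumes b: "\<beta> > 1" and p: "p \<ge> 1" and q: "q \<ge> 0"
    and x: "0 < x" "x < 1" "G \<beta> p q x = 1" and y: "0 < y" "y < 1" "G \<beta> p q y = 1"
  shows "x = y"
proof (rule ccontr)
  assume ne: "x \<noteq> y"
  have "H \<beta> p q x < H \<beta> p q y" using key(2)[OF b _ q _ y(2) y(3), of x] x y p ne by auto
  moreover have "H \<beta> p q y < H \<beta> p q x" using key(2)[OF b _ q _ x(2) x(3), of y] x y p ne by auto
  ultimately show False by simp
qed

definition S :: "real \<Rightarrow> real \<Rightarrow> real \<Rightarrow> real" where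
  "S \<beta> p q = (THE \<sigma>. 0 < \<sigma> \<and> \<sigma> < 1 \<and> G \<beta> p q \<sigma> = 1)"

lemma S_prop:
  assumes b: "\<beta> > 1" and p: "p \<ge> 1" and q: "q \<ge> 0"
  shows "0 < S \<beta> p q \<and> S \<beta> p q < 1 \<and> G \<beta> p q (S \<beta> p q) = 1"
proof -
  have "\<exists>!\<sigma>. 0 < \<sigma> \<and> \<sigma> < 1 \<and> G \<beta> p q \<sigma> = 1"
    using G_exists[OF assms] G_unique[OF assms] by blast
  thus ?thesis unfolding S_def by (rule theI')
qed

definition M :: "real \<Rightarrow> real \<Rightarrow> real \<Rightarrow> real" where
  "M \<beta> p q = H \<beta> p q (S \<beta> p q)"

lemma lf_eq:
  assumes b: "\<beta> > 1" and p: "pf t \<ge> 1" and q: "qf t \<ge> 0"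
  shows "lf t \<beta> = M \<beta> (pf t) (qf t) - t - sqrt 2"
proof -
  define \<sigma> where "\<sigma> = S \<beta> (pf t) (qf t)"
  have sh: "sigma_hat t \<beta> = \<sigma>" unfolding sigma_hat_def \<sigma>_def S_def G_def ..
  have P: "0 < \<sigma>" "\<sigma> < 1" "G \<beta> (pf t) (qf t) \<sigma> = 1" using S_prop[OF b p q] unfolding \<sigma>_def by auto
  define c where "c = sqrt (1 - \<sigma>\<^sup>2)"
  define d where "d = sqrt (\<beta>\<^sup>2 - \<sigma>\<^sup>2)"
  have \<sigma>2: "\<sigma>\<^sup>2 < 1" using P by (simp add: power_less_one_iff)
  have b2: "1 < \<beta>\<^sup>2" using b by (simp add: one_less_power)
  have cpos: "c > 0" unfolding c_def using \<sigma>2 by simp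
  have dpos: "d > 0" unfolding d_def using \<sigma>2 b2 by simp
  have c2: "c\<^sup>2 = 1 - \<sigma>\<^sup>2" unfolding c_def using \<sigma>2 by simp
  have d2: "d\<^sup>2 = \<beta>\<^sup>2 - \<sigma>\<^sup>2" unfolding d_def using \<sigma>2 b2 by simp
  have eq': "pf t * \<sigma> / c + qf t * \<sigma> / d = 1" using P(3) unfolding G_def c_def d_def .
  have "pf t / c + \<beta>\<^sup>2 * qf t / d = pf t * ((c\<^sup>2 + \<sigma>\<^sup>2) / c) + qf t * ((d\<^sup>2 + \<sigma>\<^sup>2) / d)"
    using c2 d2 by simp
  also have "\<dots> = pf t * c + qf t * d + \<sigma> * (pf t * \<sigma> / c + qf t * \<sigma> / d)"
    using cpos dpos by (simp add: field_simps power2_eq_square)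
  also have "\<dots> = pf t * c + qf t * d + \<sigma>" by (simp only: eq' mult_1_right)
  also have "\<dots> = H \<beta> (pf t) (qf t) \<sigma>" unfolding H_def c_def d_def by simp
  finally show ?thesis unfolding lf_def sh M_def \<sigma>_def c_def d_def by simp
qed

lemma delta_eq:
  assumes b: "\<beta> > 1"
  shows "delta k \<beta> = M \<beta> (real k + 2) (real k + 1) - M \<beta> (real k + 1) (real k) - 2"
proof -
  have "lf (2 * real k + 2) \<beta> = M \<beta> (real k + 2) (real k + 1) - (2 * real k + 2) - sqrt 2"
    using lf_eq[OF b, of "2 * real k + 2"] by (simp add: qf_even2)
  moreover have "lf (2 * real k) \<beta> = M \<beta> (real k + 1) (real k) - (2 * real k) - sqrt 2"
    using lf_eq[OF b, of "2 * real k"] by (simp add: qf_even)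
  ultimately show ?thesis unfolding delta_def by simp
qed


lemma delta_mono:
  assumes b: "\<beta> > 1"
  shows "delta k \<beta> < delta (Suc k) \<beta>"
proof -
  define \<sigma> where "\<sigma> = S \<beta> (real k + 2) (real k + 1)"
  have P: "0 < \<sigma>" "\<sigma> < 1" "G \<beta> (real k + 2) (real k + 1) \<sigma> = 1"
    using S_prop[OF b, of "real k + 2" "real k + 1"] unfolding \<sigma>_def by auto
  have P3: "0 < S \<beta> (real k + 3) (real k + 2)" "S \<beta> (real k + 3) (real k + 2) < 1"
    "G \<beta> (real k + 3) (real k + 2) (S \<beta> (real k + 3) (real k + 2)) = 1"
    using S_prop[OF b, of "real k + 3" "real k + 2"] by auto
  have P1: "0 < S \<beta> (real k + 1) (real k)" "S \<beta> (real k + 1) (real k) < 1"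
    "G \<beta> (real k + 1) (real k) (S \<beta> (real k + 1) (real k)) = 1"
    using S_prop[OF b, of "real k + 1" "real k"] by auto
  have \<sigma>2: "\<sigma>\<^sup>2 < 1" using P by (simp add: power_less_one_iff)
  have b2: "1 < \<beta>\<^sup>2" using b by (simp add: one_less_power)
  have Glin: "G \<beta> (real k + 3) (real k + 2) \<sigma> = G \<beta> (real k + 2) (real k + 1) \<sigma>
      + \<sigma> / sqrt (1 - \<sigma>\<^sup>2) + \<sigma> / sqrt (\<beta>\<^sup>2 - \<sigma>\<^sup>2)"
    unfolding G_def by (simp add: add_divide_distrib algebra_simps)
  have "\<sigma> / sqrt (1 - \<sigma>\<^sup>2) > 0" using P \<sigma>2 by simp
  moreover have "\<sigma> / sqrt (\<beta>\<^sup>2 - \<sigma>\<^sup>2) > 0" using P \<sigma>2 b2 by simp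
  ultimately have "G \<beta> (real k + 3) (real k + 2) \<sigma> > 1" using Glin P(3) by linarith
  hence ne: "\<sigma> \<noteq> S \<beta> (real k + 3) (real k + 2)" using P3(3) by auto
  have h3: "H \<beta> (real k + 3) (real k + 2) \<sigma> < M \<beta> (real k + 3) (real k + 2)"
    unfolding M_def using key(2)[OF b _ _ _ P3(2) P3(3), of \<sigma>] P3(1) P ne by auto
  have h1: "H \<beta> (real k + 1) (real k) \<sigma> \<le> M \<beta> (real k + 1) (real k)"
    unfolding M_def using key(1)[OF b _ _ _ P1(2) P1(3), of \<sigma>] P1(1) P by auto
  have h2: "M \<beta> (real k + 2) (real k + 1) = H \<beta> (real k + 2) (real k + 1) \<sigma>"
    unfolding M_def \<sigma>_def ..
  have lin: "H \<beta> (real k + 3) (real k + 2) \<sigma> + H \<beta> (real k + 1) (real k) \<sigma>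
      = 2 * H \<beta> (real k + 2) (real k + 1) \<sigma>" unfolding H_def by (simp add: algebra_simps)
  have "delta (Suc k) \<beta> = M \<beta> (real k + 3) (real k + 2) - M \<beta> (real k + 2) (real k + 1) - 2"
    using delta_eq[OF b, of "Suc k"] by (simp add: algebra_simps)
  thus ?thesis using delta_eq[OF b, of k] h1 h2 h3 lin by linarith
qed

lemma sqrt_le_aux: "0 \<le> y \<Longrightarrow> x \<le> y\<^sup>2 \<Longrightarrow> sqrt x \<le> y"
  using real_sqrt_le_mono[of x "y\<^sup>2"] by simp

lemma L1: assumes "0 \<le> y" "y \<le> 1" shows "1 - y/2 - y\<^sup>2/2 \<le> sqrt (1 - y)"
proof (rule real_le_rsqrt)
  have "y\<^sup>2 \<le> 1" using assms by (simp add: power_le_one)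
  hence "3/4 - y/2 - y\<^sup>2/4 \<ge> 0" using assms by simp
  hence nn: "y\<^sup>2 * (3/4 - y/2 - y\<^sup>2/4) \<ge> 0" by simp
  have "(1 - y/2 - y\<^sup>2/2)\<^sup>2 = (1 - y) - y\<^sup>2 * (3/4 - y/2 - y\<^sup>2/4)"
    by (simp add: power2_eq_square field_simps)
  thus "(1 - y/2 - y\<^sup>2/2)\<^sup>2 \<le> 1 - y" using nn by linarith
qed

lemma L2: assumes b: "\<beta> > 1" and "0 \<le> x" "x \<le> 1"
  shows "\<beta> - x/(2*\<beta>) - x\<^sup>2/(2*\<beta>^3) \<le> sqrt (\<beta>\<^sup>2 - x)"
proof -
  define y where "y = x / \<beta>\<^sup>2"
  have b2: "1 < \<beta>\<^sup>2" using b by (simp add: one_less_power)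
  have xb: "x \<le> \<beta>\<^sup>2" using assms b2 by linarith
  have y: "0 \<le> y" "y \<le> 1" unfolding y_def using assms b2 xb by (auto simp: divide_le_eq_1)
  have "\<beta>\<^sup>2 - x = \<beta>\<^sup>2 * (1 - y)" unfolding y_def using b by (simp add: field_simps)
  hence "sqrt (\<beta>\<^sup>2 - x) = \<beta> * sqrt (1 - y)" using b by (simp add: real_sqrt_mult)
  moreover have "\<beta> * (1 - y/2 - y\<^sup>2/2) \<le> \<beta> * sqrt (1 - y)" using L1[OF y] b by simp
  moreover have "\<beta> * (1 - y/2 - y\<^sup>2/2) = \<beta> - x/(2*\<beta>) - x\<^sup>2/(2*\<beta>^3)"
    unfolding y_def using b by (simp add: field_simps power2_eq_square power3_eq_cube)
  ultimately show ?thesis by simp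
qed

lemma M_upper:
  assumes b: "\<beta> > 1" and p: "p \<ge> 1" and q: "q \<ge> 0"
  shows "M \<beta> p q \<le> p + q * \<beta> + 1 / (2 * (p + q / \<beta>))"
proof -
  define \<sigma> where "\<sigma> = S \<beta> p q"
  have P: "0 < \<sigma>" "\<sigma> < 1" using S_prop[OF b p q] unfolding \<sigma>_def by auto
  have \<sigma>2: "\<sigma>\<^sup>2 < 1" using P by (simp add: power_less_one_iff)
  have b2: "1 < \<beta>\<^sup>2" using b by (simp add: one_less_power)
  have s1: "sqrt (1 - \<sigma>\<^sup>2) \<le> 1 - \<sigma>\<^sup>2/2"
    by (rule sqrt_le_aux) (use \<sigma>2 P in \<open>auto simp: power2_eq_square field_simps\<close>)
  have "\<sigma>\<^sup>2/(2*\<beta>) \<le> \<beta>" using \<sigma>2 b2 b by (simp add: field_simps power2_eq_square)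
  hence s2: "sqrt (\<beta>\<^sup>2 - \<sigma>\<^sup>2) \<le> \<beta> - \<sigma>\<^sup>2/(2*\<beta>)"
    by (intro sqrt_le_aux) (use b P in \<open>auto simp: power2_eq_square field_simps\<close>)
  define A where "A = p + q / \<beta>"
  have Apos: "A > 0" unfolding A_def using p q b by (simp add: add_pos_nonneg)
  have "M \<beta> p q \<le> p * (1 - \<sigma>\<^sup>2/2) + q * (\<beta> - \<sigma>\<^sup>2/(2*\<beta>)) + \<sigma>"
    unfolding M_def H_def \<sigma>_def[symmetric]
    using mult_left_mono[OF s1, of p] mult_left_mono[OF s2, of q] p q by linarith
  also have "\<dots> = p + q * \<beta> + (\<sigma> - A * \<sigma>\<^sup>2 / 2)" unfolding A_def using b
    by (simp add: field_simps)
  also have "\<sigma> - A * \<sigma>\<^sup>2 / 2 = 1 / (2 * A) - (A * \<sigma> - 1)\<^sup>2 / (2 * A)"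
    using Apos by (simp add: field_simps power2_eq_square)
  also have "\<dots> \<le> 1 / (2 * A)" using Apos by simp
  finally show ?thesis unfolding A_def by simp
qed

lemma M_lower:
  assumes b: "\<beta> > 1" and p: "p \<ge> 1" and q: "q \<ge> 0"
  shows "M \<beta> p q \<ge> p + q * \<beta> + 1 / (2 * (p + q / \<beta>)) - (p + q / \<beta>^3) / (2 * (p + q / \<beta>)^4)"
proof -
  define A where "A = p + q / \<beta>"
  have "q / \<beta> \<ge> 0" using q b by simp
  hence A1: "A \<ge> 1" unfolding A_def using p by linarith
  define s where "s = 1 / A"
  have s: "0 \<le> s" "s \<le> 1" unfolding s_def using A1 by auto
  have s2: "0 \<le> s\<^sup>2" "s\<^sup>2 \<le> 1" using s by (auto simp: power_le_one)
  have P: "0 < S \<beta> p q" "S \<beta> p q < 1" "G \<beta> p q (S \<beta> p q) = 1" using S_prop[OF b p q] by auto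
  have "H \<beta> p q s \<le> M \<beta> p q" unfolding M_def
    using key(1)[OF b _ q _ P(2) P(3) s] P(1) p by auto
  moreover have "p * (1 - s\<^sup>2/2 - (s\<^sup>2)\<^sup>2/2) + q * (\<beta> - s\<^sup>2/(2*\<beta>) - (s\<^sup>2)\<^sup>2/(2*\<beta>^3)) + s \<le> H \<beta> p q s"
    unfolding H_def using mult_left_mono[OF L1[OF s2], of p] mult_left_mono[OF L2[OF b s2], of q] p q
    by linarith
  moreover have "p * (1 - s\<^sup>2/2 - (s\<^sup>2)\<^sup>2/2) + q * (\<beta> - s\<^sup>2/(2*\<beta>) - (s\<^sup>2)\<^sup>2/(2*\<beta>^3)) + s
      = p + q * \<beta> + (s - A * s\<^sup>2 / 2) - (p + q / \<beta>^3) * s^4 / 2"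
    unfolding A_def using b by (simp add: field_simps power2_eq_square power4_eq_xxxx power3_eq_cube)
  moreover have "s - A * s\<^sup>2 / 2 = 1 / (2 * A)" unfolding s_def using A1
    by (simp add: field_simps power2_eq_square)
  moreover have "(p + q / \<beta>^3) * s^4 / 2 = (p + q / \<beta>^3) / (2 * A^4)" unfolding s_def
    by (simp add: power_one_over)
  ultimately show ?thesis unfolding A_def by linarith
qed


lemma B_bound:
  fixes \<beta> K A p q c :: real
  assumes b: "\<beta> > 1" and K: "1 \<le> K" "K \<le> A" and p: "0 \<le> p" and q: "0 \<le> q"
    and pq: "p + q \<le> c * K"
  shows "(p + q / \<beta>^3) / (2 * A^4) \<le> c / (2 * K^3)"
proof -
  have "1 \<le> \<beta>" using b by simp
  hence "1 \<le> \<beta>^3" by (rule one_le_power)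
  hence "q / \<beta>^3 \<le> q" using divide_left_mono[OF \<open>1 \<le> \<beta>^3\<close> q] b by simp
  hence n: "p + q / \<beta>^3 \<le> c * K" using pq by linarith
  have nn: "0 \<le> p + q / \<beta>^3" using p q b by simp
  have "K^4 \<le> A^4" using K by (intro power_mono) auto
  moreover have "K^4 > 0" using K by simp
  ultimately have "(p + q / \<beta>^3) / (2 * A^4) \<le> (c * K) / (2 * K^4)"
    using n nn by (intro frac_le) auto
  also have "\<dots> = c / (2 * K^3)" using K by (simp add: field_simps power4_eq_xxxx power3_eq_cube)
  finally show ?thesis .
qed

lemma aux_eq:
  fixes w K b C0 :: real
  assumes "w > 0" "K > 0"
  shows "b / 2 * ((C0 * K) / (w * K\<^sup>2 * ((w * K) * (w * K)))) = (b * C0 / (2 * w^3)) / K^3"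
  using assms by (simp add: field_simps power2_eq_square power3_eq_cube)

lemma D_bound:
  fixes \<beta> K :: real
  assumes b: "\<beta> > 1" and K: "1 \<le> K"
  defines "A1 \<equiv> K + 1 + K / \<beta>" and "A2 \<equiv> K + 2 + (K + 1) / \<beta>"
  shows "0 \<le> 1 / (2 * A2) - 1 / (2 * A1) + \<beta> / (2 * (\<beta> + 1) * K\<^sup>2)"
    and "1 / (2 * A2) - 1 / (2 * A1) + \<beta> / (2 * (\<beta> + 1) * K\<^sup>2)
       \<le> (\<beta> * ((\<beta> + 1) * (3 * \<beta> + 1) + \<beta> * (2 * \<beta> + 1)) / (2 * (\<beta> + 1)^3)) / K^3"
proof -
  define X1 where "X1 = (\<beta> + 1) * K + \<beta>"
  define X2 where "X2 = (\<beta> + 1) * K + 2 * \<beta> + 1"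
  define N where "N = (\<beta> + 1) * (3 * \<beta> + 1) * K + \<beta> * (2 * \<beta> + 1)"
  define C0 where "C0 = (\<beta> + 1) * (3 * \<beta> + 1) + \<beta> * (2 * \<beta> + 1)"
  have bK: "(\<beta> + 1) * K > 0" using b K by simp
  have X1p: "X1 \<ge> (\<beta> + 1) * K" "X1 > 0" unfolding X1_def using b bK by auto
  have X2p: "X2 \<ge> (\<beta> + 1) * K" "X2 > 0" unfolding X2_def using b bK by auto
  have Kp: "K > 0" using K by simp
  have eA1: "A1 = X1 / \<beta>" unfolding A1_def X1_def using b by (simp add: field_simps)
  have eA2: "A2 = X2 / \<beta>" unfolding A2_def X2_def using b by (simp add: field_simps)
  have NX: "N = X1 * X2 - (\<beta> + 1)\<^sup>2 * K\<^sup>2" unfolding N_def X1_def X2_def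
    by (simp add: power2_eq_square algebra_simps)
  have DE: "1 / (2 * A2) - 1 / (2 * A1) + \<beta> / (2 * (\<beta> + 1) * K\<^sup>2)
      = \<beta> / 2 * (N / ((\<beta> + 1) * K\<^sup>2 * (X1 * X2)))"
  proof -
    have X21: "X2 = X1 + (\<beta> + 1)" unfolding X1_def X2_def by simp
    define Z where "Z = (\<beta> + 1) * K\<^sup>2"
    have Zp: "Z > 0" unfolding Z_def using b Kp by simp
    have NZ: "N = X1 * X2 - (\<beta> + 1) * Z" unfolding NX Z_def by (simp add: power2_eq_square)
    have l: "\<beta> / (2 * (\<beta> + 1) * K\<^sup>2) = \<beta> / (2 * Z)" unfolding Z_def by simp
    have r: "(\<beta> + 1) * K\<^sup>2 * (X1 * X2) = Z * (X1 * X2)" unfolding Z_def by simp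
    show ?thesis unfolding l r eA1 eA2 NZ using b X1p X2p Zp
      by (simp add: field_simps) (simp add: X21 algebra_simps)
  qed
  have Nn: "0 \<le> N" unfolding N_def using b K by simp
  have den: "0 < (\<beta> + 1) * K\<^sup>2 * (X1 * X2)" using b X1p X2p Kp by simp
  show "0 \<le> 1 / (2 * A2) - 1 / (2 * A1) + \<beta> / (2 * (\<beta> + 1) * K\<^sup>2)"
    unfolding DE using Nn den b by simp
  have "\<beta> * (2 * \<beta> + 1) * 1 \<le> \<beta> * (2 * \<beta> + 1) * K"
    using b K by (intro mult_left_mono) auto
  hence NC: "N \<le> C0 * K" unfolding N_def C0_def by (simp add: algebra_simps)
  have XX: "((\<beta> + 1) * K) * ((\<beta> + 1) * K) \<le> X1 * X2"
    using X1p X2p b Kp by (intro mult_mono) auto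
  have den2: "0 < (\<beta> + 1) * K\<^sup>2 * (((\<beta> + 1) * K) * ((\<beta> + 1) * K))" using b Kp by simp
  have "(\<beta> + 1) * K\<^sup>2 * (((\<beta> + 1) * K) * ((\<beta> + 1) * K)) \<le> (\<beta> + 1) * K\<^sup>2 * (X1 * X2)"
    using XX b by (intro mult_left_mono) auto
  hence "N / ((\<beta> + 1) * K\<^sup>2 * (X1 * X2)) \<le> (C0 * K) / ((\<beta> + 1) * K\<^sup>2 * (((\<beta> + 1) * K) * ((\<beta> + 1) * K)))"
    using NC Nn den2 by (intro frac_le) auto
  hence "\<beta> / 2 * (N / ((\<beta> + 1) * K\<^sup>2 * (X1 * X2))) \<le> \<beta> / 2 * ((C0 * K) / ((\<beta> + 1) * K\<^sup>2 * (((\<beta> + 1) * K) * ((\<beta> + 1) * K))))"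
    using b by (intro mult_left_mono) auto
  also have "\<dots> = (\<beta> * C0 / (2 * (\<beta> + 1)^3)) / K^3"
    using b Kp by (intro aux_eq) auto
  finally show "1 / (2 * A2) - 1 / (2 * A1) + \<beta> / (2 * (\<beta> + 1) * K\<^sup>2)
       \<le> (\<beta> * ((\<beta> + 1) * (3 * \<beta> + 1) + \<beta> * (2 * \<beta> + 1)) / (2 * (\<beta> + 1)^3)) / K^3"
    unfolding DE C0_def .
qed

theorem theorem3p8:
  fixes \<beta> :: real
  assumes "\<beta> > 1"
  shows "strict_mono (\<lambda>k. delta k \<beta>)
         \<and> (\<lambda>k. delta k \<beta> - ((\<beta> - 1) - \<beta> / (2 * (\<beta> + 1)) * (1 / (real k)\<^sup>2)))
             \<in> O[sequentially](\<lambda>k. 1 / (real k) ^ 3)"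
proof
  show "strict_mono (\<lambda>k. delta k \<beta>)"
    by (rule strict_monoI_Suc) (rule delta_mono[OF assms])
  define Cd where "Cd = \<beta> * ((\<beta> + 1) * (3 * \<beta> + 1) + \<beta> * (2 * \<beta> + 1)) / (2 * (\<beta> + 1)^3)"
  have bnd: "norm (delta k \<beta> - ((\<beta> - 1) - \<beta> / (2 * (\<beta> + 1)) * (1 / (real k)\<^sup>2)))
      \<le> (Cd + 4) * norm (1 / (real k) ^ 3)" if k: "k \<ge> 1" for k
  proof -
    define K where "K = real k"
    have K: "1 \<le> K" unfolding K_def using k by simp
    define A1 where "A1 = K + 1 + K / \<beta>"
    define A2 where "A2 = K + 2 + (K + 1) / \<beta>"
    have b0: "0 \<le> K / \<beta>" "0 \<le> (K + 1) / \<beta>" using K assms by auto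
    have up1: "M \<beta> (K + 1) K \<le> (K + 1) + K * \<beta> + 1 / (2 * A1)"
      using M_upper[OF assms, of "K + 1" K] K unfolding A1_def by simp
    have up2: "M \<beta> (K + 2) (K + 1) \<le> (K + 2) + (K + 1) * \<beta> + 1 / (2 * A2)"
      using M_upper[OF assms, of "K + 2" "K + 1"] K unfolding A2_def by simp
    have lo1: "M \<beta> (K + 1) K \<ge> (K + 1) + K * \<beta> + 1 / (2 * A1) - ((K + 1) + K / \<beta>^3) / (2 * A1^4)"
      using M_lower[OF assms, of "K + 1" K] K unfolding A1_def by simp
    have lo2: "M \<beta> (K + 2) (K + 1) \<ge> (K + 2) + (K + 1) * \<beta> + 1 / (2 * A2) - ((K + 2) + (K + 1) / \<beta>^3) / (2 * A2^4)"
      using M_lower[OF assms, of "K + 2" "K + 1"] K unfolding A2_def by simp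
    have B1: "((K + 1) + K / \<beta>^3) / (2 * A1^4) \<le> 3 / (2 * K^3)"
      using B_bound[OF assms K, of A1 "K + 1" K 3] K b0 unfolding A1_def by simp
    have B2: "((K + 2) + (K + 1) / \<beta>^3) / (2 * A2^4) \<le> 5 / (2 * K^3)"
      using B_bound[OF assms K, of A2 "K + 2" "K + 1" 5] K b0 unfolding A2_def by simp
    have D1: "0 \<le> 1 / (2 * A2) - 1 / (2 * A1) + \<beta> / (2 * (\<beta> + 1) * K\<^sup>2)"
      using D_bound(1)[OF assms K] unfolding A1_def A2_def .
    have D2: "1 / (2 * A2) - 1 / (2 * A1) + \<beta> / (2 * (\<beta> + 1) * K\<^sup>2) \<le> Cd / K^3"
      using D_bound(2)[OF assms K] unfolding A1_def A2_def Cd_def .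
    have de: "delta k \<beta> = M \<beta> (K + 2) (K + 1) - M \<beta> (K + 1) K - 2"
      using delta_eq[OF assms, of k] unfolding K_def .
    have t: "\<beta> / (2 * (\<beta> + 1)) * (1 / K\<^sup>2) = \<beta> / (2 * (\<beta> + 1) * K\<^sup>2)" by simp
    have Kp: "K^3 > 0" using K by simp
    have e: "3 / (2 * K^3) + 5 / (2 * K^3) = 4 / K^3" by (simp add: field_simps)
    have "\<bar>delta k \<beta> - ((\<beta> - 1) - \<beta> / (2 * (\<beta> + 1)) * (1 / K\<^sup>2))\<bar> \<le> Cd / K^3 + 4 / K^3"
      unfolding de t using up1 up2 lo1 lo2 B1 B2 D1 D2 e
      by (simp add: abs_le_iff algebra_simps) linarith?
    also have "\<dots> = (Cd + 4) * norm (1 / K ^ 3)" using Kp by (simp add: field_simps)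
    finally show ?thesis unfolding K_def by simp
  qed
  show "(\<lambda>k. delta k \<beta> - ((\<beta> - 1) - \<beta> / (2 * (\<beta> + 1)) * (1 / (real k)\<^sup>2)))
             \<in> O[sequentially](\<lambda>k. 1 / (real k) ^ 3)"
    by (rule bigoI) (use bnd in \<open>auto simp: eventually_at_top_linorder\<close>)
qed

end
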